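(* Let $n,m\ge 3$ and let $G$ be the disjoint union of an $n$-cycle $L$ and an $m$-cycle $L'$. Then the mean squared linking number $E[\mathrm{lk}(L,L')^2]$ of a random linear embedding of $G$ in the cube $C^3=[0,1]^3$ equals $\frac{1}{2}nmq$, where $q$ is the constant defined in the context.
   Context: A random linear embedding of a graph $G$ in $C^3=[0,1]^3$: the vertices of $G$ are placed at independent uniformly distributed points of $C^3$, and each edge $(v_i,v_j)$ is realized as the straight segment between $v_i$ and $v_j$. For two oriented segments $l,l'$ in $\mathbb{R}^3$, the signed crossing $\epsilon(l,l')$ is computed in the orthogonal projection onto a fixed plane (e.g. the $xy$-plane): it is $0$ if the projections do not cross, and otherwise $\pm1$ according to the usual right-hand sign convention for the crossing. The linking number of two disjoint oriented polygons is $\frac12$ the sum of $\epsilon(l,l')$ over all edges $l$ of the first and $l'$ of the second. Let $A,B,C,P,Q,R$ be independent uniform points in $C^3$ and write $X\to Y$ for the oriented segment from $X$ to $Y$. Define $s$ by $2s=P(\epsilon(A\to B,P\to Q)\neq 0)$; $u=E[\epsilon(A\to B,P\to Q)\,\epsilon(A\to B,Q\to R)]$; $v=E[\epsilon(A\to B,P\to Q)\,\epsilon(B\to C,Q\to R)]$; and $q=s+2(u+v)$ (it is known that $q>0$). *)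

theory Defs
  imports "HOL-Probability.Probability"
begin

type_synonym point3 = "real \<times> real \<times> real"

definition px :: "point3 \<Rightarrow> real" where "px p = fst p"
definition py :: "point3 \<Rightarrow> real" where "py p = fst (snd p)"
definition pz :: "point3 \<Rightarrow> real" where "pz p = snd (snd p)"

definition cube3 :: "point3 set" where
  "cube3 = {0..1} \<times> {0..1} \<times> {0..1}"

definition unif_cube :: "point3 measure" where
  "unif_cube = uniform_measure lborel cube3"

definition cross2 :: "real \<Rightarrow> real \<Rightarrow> real \<Rightarrow> real \<Rightarrow> real" where
  "cross2 ux uy wx wy = ux * wy - uy * wx"

text \<open>Signed crossing of the oriented segments a->b and c->d in the orthogonal
  projection onto the xy-plane (viewed from +z).  The projections are
  a + s(b-a) and c + t(d-c); they cross iff the solution (s,t) lies in [0,1]^2.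
  At the crossing the sign is +1 iff the over-strand's direction crossed with
  the under-strand's direction has positive z-component (right-hand rule).
  Degenerate configurations (parallel projections, equal heights) give 0;
  they have probability zero.\<close>
definition eps :: "point3 \<Rightarrow> point3 \<Rightarrow> point3 \<Rightarrow> point3 \<Rightarrow> real" where
  "eps a b c d =
    (let ux = px b - px a; uy = py b - py a;
         wx = px d - px c; wy = py d - py c;
         rx = px c - px a; ry = py c - py a;
         D = cross2 ux uy wx wy
     in if D = 0 then 0 else
       (let s = cross2 rx ry wx wy / D; t = cross2 rx ry ux uy / D
        in if 0 \<le> s \<and> s \<le> 1 \<and> 0 \<le> t \<and> t \<le> 1
           then sgn D * sgn ((pz a + s * (pz b - pz a)) - (pz c + t * (pz d - pz c)))
           else 0))"

definition linking_number :: "nat \<Rightarrow> (nat \<Rightarrow> point3) \<Rightarrow> nat \<Rightarrow> (nat \<Rightarrow> point3) \<Rightarrow> real" where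
  "linking_number n X m Y =
     (1/2) * (\<Sum>i<n. \<Sum>j<m. eps (X i) (X (Suc i mod n)) (Y j) (Y (Suc j mod m)))"

text \<open>Random linear embedding of the disjoint union of an n-cycle and an m-cycle:
  n + m independent uniform points in the cube.\<close>
definition embed_space :: "nat \<Rightarrow> nat \<Rightarrow> ((nat \<Rightarrow> point3) \<times> (nat \<Rightarrow> point3)) measure" where
  "embed_space n m = (PiM {..<n} (\<lambda>_. unif_cube)) \<Otimes>\<^sub>M (PiM {..<m} (\<lambda>_. unif_cube))"

text \<open>Six independent uniform points A,B,C,P,Q,R = w 0, ..., w 5.\<close>
definition six_space :: "(nat \<Rightarrow> point3) measure" where
  "six_space = PiM {..<6} (\<lambda>_. unif_cube)"

definition const_s :: real where
  "const_s = measure six_space {w \<in> space six_space. eps (w 0) (w 1) (w 3) (w 4) \<noteq> 0} / 2"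

definition const_u :: real where
  "const_u = (\<integral>w. eps (w 0) (w 1) (w 3) (w 4) * eps (w 0) (w 1) (w 4) (w 5) \<partial>six_space)"

definition const_v :: real where
  "const_v = (\<integral>w. eps (w 0) (w 1) (w 3) (w 4) * eps (w 1) (w 2) (w 4) (w 5) \<partial>six_space)"

definition const_q :: real where
  "const_q = const_s + 2 * (const_u + const_v)"

end

theory Submission imports Defs begin

lemma cube3_cbox: "cube3 = cbox (0,0,0) (1,1,1)"
  by (simp add: cube3_def cbox_Pair_eq)

lemma emeasure_cube3: "emeasure lborel cube3 = 1"
  unfolding cube3_cbox by (simp add: emeasure_lborel_cbox_eq Basis_prod_def inner_prod_def)

lemma prob_unif: "prob_space unif_cube"
  unfolding unif_cube_def by (rule prob_space_uniform_measure) (simp_all add: emeasure_cube3)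

lemma sets_unif[measurable_cong, simp]: "sets unif_cube = sets borel"
  unfolding unif_cube_def by simp

lemma space_unif[simp]: "space unif_cube = UNIV"
  unfolding unif_cube_def by simp

lemma eps_measurable[measurable]:
  assumes [measurable]: "f1 \<in> borel_measurable M" "f2 \<in> borel_measurable M" "f3 \<in> borel_measurable M" "f4 \<in> borel_measurable M"
  shows "(\<lambda>x. eps (f1 x) (f2 x) (f3 x) (f4 x)) \<in> borel_measurable M"
proof -
  have [measurable]: "px \<in> borel_measurable borel" "py \<in> borel_measurable borel" "pz \<in> borel_measurable borel"
    unfolding px_def py_def pz_def by (intro borel_measurable_continuous_onI continuous_intros)+
  show ?thesis unfolding eps_def Let_def cross2_def by measurable
qed

lemma eps_bound: "eps a b c d \<in> {-1,0,1}"
  unfolding eps_def Let_def by (auto simp: sgn_real_def)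

lemma eps_sym: "eps c d a b = eps a b c d"
proof -
  define D where "D = cross2 (px b - px a) (py b - py a) (px d - px c) (py d - py c)"
  define s where "s = cross2 (px c - px a) (py c - py a) (px d - px c) (py d - py c) / D"
  define t where "t = cross2 (px c - px a) (py c - py a) (px b - px a) (py b - py a) / D"
  have D': "cross2 (px d - px c) (py d - py c) (px b - px a) (py b - py a) = - D"
    unfolding D_def cross2_def by algebra
  have s': "cross2 (px a - px c) (py a - py c) (px b - px a) (py b - py a) / - D = t"
    unfolding t_def cross2_def by (cases "D = 0") (simp_all add: field_simps)
  have t': "cross2 (px a - px c) (py a - py c) (px d - px c) (py d - py c) / - D = s"
    unfolding s_def cross2_def by (cases "D = 0") (simp_all add: field_simps)
  have h: "sgn (pz c + t * (pz d - pz c) - (pz a + s * (pz b - pz a))) = - sgn (pz a + s * (pz b - pz a) - (pz c + t * (pz d - pz c)))"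
    by (metis minus_diff_eq sgn_minus)
  show ?thesis
    unfolding eps_def Let_def D' s' t' D_def[symmetric] s_def[symmetric] t_def[symmetric]
    using h by (auto simp: sgn_minus)
qed

lemma eps_anti: "eps b a c d = - eps a b c d"
proof -
  define D where "D = cross2 (px b - px a) (py b - py a) (px d - px c) (py d - py c)"
  define s where "s = cross2 (px c - px a) (py c - py a) (px d - px c) (py d - py c) / D"
  define t where "t = cross2 (px c - px a) (py c - py a) (px b - px a) (py b - py a) / D"
  have D': "cross2 (px a - px b) (py a - py b) (px d - px c) (py d - py c) = - D"
    unfolding D_def cross2_def by algebra
  have s': "D \<noteq> 0 \<Longrightarrow> cross2 (px c - px b) (py c - py b) (px d - px c) (py d - py c) / - D = 1 - s"
    unfolding s_def D_def cross2_def by (simp add: field_simps)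
  have t': "D \<noteq> 0 \<Longrightarrow> cross2 (px c - px b) (py c - py b) (px a - px b) (py a - py b) / - D = t"
    unfolding t_def D_def cross2_def by (simp add: field_simps)
  have h: "pz b + (1 - s) * (pz a - pz b) = pz a + s * (pz b - pz a)"
    by (simp add: algebra_simps)
  show ?thesis
  proof (cases "D = 0")
    case True
    then show ?thesis unfolding eps_def Let_def D' D_def[symmetric] by simp
  next
    case False
    show ?thesis
      unfolding eps_def Let_def D' s'[OF False] t'[OF False] D_def[symmetric] s_def[symmetric] t_def[symmetric] h
      using False by (auto simp: sgn_minus)
  qed
qed
lemma eps_anti2: "eps a b d c = - eps a b c d"
  by (metis eps_sym eps_anti)

abbreviation ZZ :: "nat \<Rightarrow> (nat \<Rightarrow> point3) measure" where
  "ZZ N \<equiv> PiM {..<N} (\<lambda>_. unif_cube)"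

lemma reindex:
  fixes H :: "(nat \<Rightarrow> point3) \<Rightarrow> real"
  assumes "inj_on h J" "h ` J \<subseteq> {..<N}" and H: "H \<in> borel_measurable (PiM J (\<lambda>_. unif_cube))"
  shows "(\<integral>z. H (\<lambda>t\<in>J. z (h t)) \<partial>ZZ N) = (\<integral>w. H w \<partial>PiM J (\<lambda>_. unif_cube))"
proof -
  have d: "distr (ZZ N) (PiM J (\<lambda>i. (\<lambda>_. unif_cube) (h i))) (\<lambda>\<omega>. \<lambda>n\<in>J. \<omega> (h n)) = PiM J (\<lambda>i. (\<lambda>_. unif_cube) (h i))"
    by (rule distr_PiM_reindex) (use assms prob_unif in auto)
  have m: "(\<lambda>\<omega>. \<lambda>n\<in>J. \<omega> (h n)) \<in> measurable (ZZ N) (PiM J (\<lambda>_. unif_cube))"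
    using assms(2) by (intro measurable_restrict measurable_component_singleton) auto
  show ?thesis
    using d integral_distr[OF m H] by simp
qed

definition Psi :: "nat \<Rightarrow> nat \<Rightarrow> (nat \<Rightarrow> point3) \<times> (nat \<Rightarrow> point3) \<Rightarrow> nat \<Rightarrow> point3" where
  "Psi n m p = merge {..<n} {n..<n+m} (fst p, \<lambda>t\<in>{n..<n+m}. snd p (t - n))"

lemma embed_to_Z:
  fixes G :: "(nat \<Rightarrow> point3) \<Rightarrow> real"
  assumes G: "G \<in> borel_measurable (ZZ (n+m))"
  shows "(\<integral>p. G (Psi n m p) \<partial>embed_space n m) = (\<integral>z. G z \<partial>ZZ (n+m))"
proof -
  interpret product_prob_space "\<lambda>_. unif_cube" using prob_unif
    by (simp add: product_prob_space_def product_prob_space_axioms_def product_sigma_finite_def prob_space_imp_sigma_finite)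
  define P1 where "P1 = PiM {..<n} (\<lambda>_. unif_cube)"
  define P2 where "P2 = PiM {..<m} (\<lambda>_. unif_cube)"
  define PJ where "PJ = PiM {n..<n+m} (\<lambda>_. unif_cube)"
  define sh where "sh = (\<lambda>y. \<lambda>t\<in>{n..<n+m}. (y::nat \<Rightarrow> point3) (t - n))"
  have U: "{..<n} \<union> {n..<n+m} = {..<n+m}" by auto
  have dm: "distr (P1 \<Otimes>\<^sub>M PJ) (ZZ (n+m)) (merge {..<n} {n..<n+m}) = ZZ (n+m)"
  proof -
    have "{..<n} \<inter> {n..<n+m} = {}" by auto
    then show ?thesis using distr_merge[of "{..<n}" "{n..<n+m}"] unfolding P1_def PJ_def U by simp
  qed
  have dsh: "distr P2 PJ sh = PJ"
  proof -
    have "inj_on (\<lambda>t. t - n) {n..<n+m}" by (auto simp: inj_on_def)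
    moreover have "(\<lambda>t. t - n) \<in> {n..<n+m} \<rightarrow> {..<m}" by auto
    ultimately show ?thesis
      using distr_PiM_reindex[of "{..<m}" "\<lambda>_. unif_cube" "\<lambda>t. t - n" "{n..<n+m}"] prob_unif
      by (simp add: P2_def PJ_def sh_def)
  qed
  have msh: "sh \<in> measurable P2 PJ"
    unfolding P2_def PJ_def sh_def by (intro measurable_restrict measurable_component_singleton) auto
  have dp: "P1 \<Otimes>\<^sub>M PJ = distr (P1 \<Otimes>\<^sub>M P2) (P1 \<Otimes>\<^sub>M PJ) (\<lambda>(x, y). (x, sh y))"
  proof -
    have "distr P1 P1 (\<lambda>x. x) \<Otimes>\<^sub>M distr P2 PJ sh = distr (P1 \<Otimes>\<^sub>M P2) (P1 \<Otimes>\<^sub>M PJ) (\<lambda>(x, y). (x, sh y))"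
      by (rule pair_measure_distr[OF measurable_ident_sets[OF refl] msh]) (simp only: dsh, simp add: PJ_def prob_space_imp_sigma_finite prob_space_PiM prob_unif)
    then show ?thesis by (simp add: dsh)
  qed
  have mm: "merge {..<n} {n..<n+m} \<in> measurable (P1 \<Otimes>\<^sub>M PJ) (ZZ (n+m))"
    using measurable_merge[of "{..<n}" "{n..<n+m}" "\<lambda>_. unif_cube"] unfolding P1_def PJ_def U .
  have mp: "(\<lambda>(x, y). (x, sh y)) \<in> measurable (P1 \<Otimes>\<^sub>M P2) (P1 \<Otimes>\<^sub>M PJ)"
    using msh by measurable
  have "(\<integral>z. G z \<partial>ZZ (n+m)) = (\<integral>q. G (merge {..<n} {n..<n+m} q) \<partial>(P1 \<Otimes>\<^sub>M PJ))"
    by (subst dm[symmetric]) (rule integral_distr[OF mm G])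
  also have "\<dots> = (\<integral>p. G (merge {..<n} {n..<n+m} ((\<lambda>(x, y). (x, sh y)) p)) \<partial>(P1 \<Otimes>\<^sub>M P2))"
    by (subst dp) (rule integral_distr[OF mp], rule measurable_compose[OF mm G])
  also have "\<dots> = (\<integral>p. G (Psi n m p) \<partial>embed_space n m)"
    unfolding embed_space_def P1_def[symmetric] P2_def[symmetric] Psi_def sh_def
    by (simp add: split_beta)
  finally show ?thesis ..
qed
lemma comp_meas: "i \<in> I \<Longrightarrow> (\<lambda>z. z i) \<in> borel_measurable (PiM I (\<lambda>_. unif_cube)) \<or> True"
  by simp

lemma comp_meas': assumes "i \<in> I" shows "(\<lambda>z. z i) \<in> measurable (PiM I (\<lambda>_. unif_cube)) borel"
proof -
  have "(\<lambda>z. z i) \<in> measurable (PiM I (\<lambda>_. unif_cube)) unif_cube"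
    using assms by (rule measurable_component_singleton)
  then show ?thesis using measurable_cong_sets[OF refl sets_unif] by blast
qed

lemma six:
  fixes H :: "(nat \<Rightarrow> point3) \<Rightarrow> real"
  assumes "distinct [a0,a1,a2,a3,a4,a5]" "a0 < N" "a1 < N" "a2 < N" "a3 < N" "a4 < N" "a5 < N"
    and H: "H \<in> borel_measurable six_space"
  shows "(\<integral>z. H (\<lambda>t\<in>{..<6}. z ([a0,a1,a2,a3,a4,a5] ! t)) \<partial>ZZ N) = (\<integral>w. H w \<partial>six_space)"
  unfolding six_space_def
proof (rule reindex)
  show "inj_on ((!) [a0, a1, a2, a3, a4, a5]) {..<6}"
    using assms(1) by (intro inj_on_nth) auto
  show "(!) [a0, a1, a2, a3, a4, a5] ` {..<6} \<subseteq> {..<N}"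
  proof
    fix x assume "x \<in> (!) [a0, a1, a2, a3, a4, a5] ` {..<6}"
    then obtain t where "t < 6" "x = [a0, a1, a2, a3, a4, a5] ! t" by auto
    then show "x \<in> {..<N}" using assms(2-7)
      by (auto simp: less_Suc_eq numeral_eq_Suc)
  qed
  show "H \<in> borel_measurable (ZZ 6)" using H unfolding six_space_def .
qed

lemma flip_zero:
  fixes G :: "(nat \<Rightarrow> point3) \<Rightarrow> real"
  assumes "a < N" "b < N" and G: "G \<in> borel_measurable (ZZ N)"
    and flip: "\<And>z. G (\<lambda>t\<in>{..<N}. z (if t = a then b else if t = b then a else t)) = - G z"
  shows "(\<integral>z. G z \<partial>ZZ N) = 0"
proof -
  let ?h = "\<lambda>t. if t = a then b else if t = b then a else t"
  have "(\<integral>z. G (\<lambda>t\<in>{..<N}. z (?h t)) \<partial>ZZ N) = (\<integral>z. G z \<partial>ZZ N)"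
    by (rule reindex) (use assms in \<open>auto simp: inj_on_def\<close>)
  then have "(\<integral>z. - G z \<partial>ZZ N) = (\<integral>z. G z \<partial>ZZ N)" by (simp add: flip)
  then show ?thesis by simp
qed

definition EE :: "nat \<Rightarrow> nat \<Rightarrow> (nat \<Rightarrow> point3) \<Rightarrow> nat \<Rightarrow> nat \<Rightarrow> real" where
  "EE n m z i j = eps (z i) (z (Suc i mod n)) (z (n + j)) (z (n + Suc j mod m))"

lemma EE_meas:
  assumes "i < n" "j < m"
  shows "(\<lambda>z. EE n m z i j) \<in> borel_measurable (ZZ (n+m))"
proof -
  have a: "Suc i mod n < n" "Suc j mod m < m" using assms by auto
  have "Suc i mod n < n+m" "n + Suc j mod m < n+m" "i < n+m" "n+j<n+m" using assms a by linarith+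
  then show ?thesis unfolding EE_def
    by (intro eps_measurable comp_meas') auto
qed

lemma Hu_meas: "(\<lambda>w. eps (w 0) (w 1) (w 3) (w 4) * eps (w 0) (w 1) (w 4) (w 5)) \<in> borel_measurable six_space"
  unfolding six_space_def by (intro borel_measurable_times eps_measurable comp_meas') auto
lemma Hv_meas: "(\<lambda>w. eps (w 0) (w 1) (w 3) (w 4) * eps (w 1) (w 2) (w 4) (w 5)) \<in> borel_measurable six_space"
  unfolding six_space_def by (intro borel_measurable_times eps_measurable comp_meas') auto
lemma Hs_meas: "(\<lambda>w. eps (w 0) (w 1) (w 3) (w 4) * eps (w 0) (w 1) (w 3) (w 4)) \<in> borel_measurable six_space"
  unfolding six_space_def by (intro borel_measurable_times eps_measurable comp_meas') auto

lemma Hs_int: "(\<integral>w. eps (w 0) (w 1) (w 3) (w 4) * eps (w 0) (w 1) (w 3) (w 4) \<partial>six_space) = 2 * const_s"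
proof -
  let ?A = "{w \<in> space six_space. eps (w 0) (w 1) (w 3) (w 4) \<noteq> 0}"
  have "(\<integral>w. eps (w 0) (w 1) (w 3) (w 4) * eps (w 0) (w 1) (w 3) (w 4) \<partial>six_space) = (\<integral>w. indicator ?A w \<partial>six_space)"
  proof (intro Bochner_Integration.integral_cong refl)
    fix w assume "w \<in> space six_space"
    then show "eps (w 0) (w 1) (w 3) (w 4) * eps (w 0) (w 1) (w 3) (w 4) = indicator ?A w"
      using eps_bound[of "w 0" "w 1" "w 3" "w 4"] by (auto simp: indicator_def)
  qed
  also have "\<dots> = measure six_space ?A" by (simp add: Int_absorb2)
  finally show ?thesis unfolding const_s_def by simp
qed
lemma nx_eq: "i < n \<Longrightarrow> Suc i mod n = (if Suc i = n then 0 else Suc i)"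
  by (auto simp: mod_Suc)

lemma nx_inj: "i < n \<Longrightarrow> k < n \<Longrightarrow> Suc i mod n = Suc k mod n \<Longrightarrow> i = k"
  by (auto simp: nx_eq split: if_splits)

lemma G_meas:
  assumes "i < n" "j < m" "k < n" "l < m"
  shows "(\<lambda>z. EE n m z i j * EE n m z k l) \<in> borel_measurable (ZZ (n+m))"
  using EE_meas[OF assms(1,2)] EE_meas[OF assms(3,4)] by (rule borel_measurable_times)

lemma zeroX:
  assumes "i < n" "j < m" "k < n" "l < m" "k \<noteq> i" "k \<noteq> Suc i mod n" "i \<noteq> Suc k mod n"
  shows "(\<integral>z. EE n m z i j * EE n m z k l \<partial>ZZ (n+m)) = 0"
proof (rule flip_zero[where a = k and b = "Suc k mod n"])
  have a: "Suc i mod n < n" "Suc k mod n < n" "Suc j mod m < m" "Suc l mod m < m" using assms by auto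
  have b: "Suc i mod n \<noteq> Suc k mod n" using nx_inj[OF assms(1,3)] assms(5) by metis
  show "k < n + m" "Suc k mod n < n + m" using a assms by linarith+
  show "(\<lambda>z. EE n m z i j * EE n m z k l) \<in> borel_measurable (ZZ (n+m))" by (rule G_meas) fact+
  fix z :: "nat \<Rightarrow> point3"
  define z' where "z' = (\<lambda>t\<in>{..<n+m}. z (if t = k then Suc k mod n else if t = Suc k mod n then k else t))"
  have e: "z' i = z i" "z' (Suc i mod n) = z (Suc i mod n)" "z' (n+j) = z (n+j)"
     "z' (n + Suc j mod m) = z (n + Suc j mod m)" "z' k = z (Suc k mod n)" "z' (Suc k mod n) = z k"
     "z' (n+l) = z (n+l)" "z' (n + Suc l mod m) = z (n + Suc l mod m)"
  proof -
    define ni where "ni = Suc i mod n"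
    define nk where "nk = Suc k mod n"
    define nj where "nj = Suc j mod m"
    define nl where "nl = Suc l mod m"
    have "ni < n" "nk < n" "nj < m" "nl < m" "ni \<noteq> nk" using a b unfolding ni_def nk_def nj_def nl_def by auto
    then show "z' i = z i" "z' (Suc i mod n) = z (Suc i mod n)" "z' (n+j) = z (n+j)"
     "z' (n + Suc j mod m) = z (n + Suc j mod m)" "z' k = z (Suc k mod n)" "z' (Suc k mod n) = z k"
     "z' (n+l) = z (n+l)" "z' (n + Suc l mod m) = z (n + Suc l mod m)"
      unfolding z'_def ni_def[symmetric] nk_def[symmetric] nj_def[symmetric] nl_def[symmetric]
      using assms unfolding ni_def[symmetric] nk_def[symmetric] nj_def[symmetric] nl_def[symmetric] by auto
  qed
  show "EE n m z' i j * EE n m z' k l = - (EE n m z i j * EE n m z k l)"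
    unfolding EE_def e by (simp add: eps_anti[of "z (Suc k mod n)" "z k"])
qed

lemma zeroY:
  assumes "i < n" "j < m" "k < n" "l < m" "l \<noteq> j" "l \<noteq> Suc j mod m" "j \<noteq> Suc l mod m"
  shows "(\<integral>z. EE n m z i j * EE n m z k l \<partial>ZZ (n+m)) = 0"
proof (rule flip_zero[where a = "n + l" and b = "n + Suc l mod m"])
  have a: "Suc i mod n < n" "Suc k mod n < n" "Suc j mod m < m" "Suc l mod m < m" using assms by auto
  have b: "Suc j mod m \<noteq> Suc l mod m" using nx_inj[OF assms(2,4)] assms(5) by metis
  show "n + l < n + m" "n + Suc l mod m < n + m" using a assms by linarith+
  show "(\<lambda>z. EE n m z i j * EE n m z k l) \<in> borel_measurable (ZZ (n+m))" by (rule G_meas) fact+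
  fix z :: "nat \<Rightarrow> point3"
  define z' where "z' = (\<lambda>t\<in>{..<n+m}. z (if t = n + l then n + Suc l mod m else if t = n + Suc l mod m then n + l else t))"
  have e: "z' i = z i" "z' (Suc i mod n) = z (Suc i mod n)" "z' (n+j) = z (n+j)"
     "z' (n + Suc j mod m) = z (n + Suc j mod m)" "z' k = z k" "z' (Suc k mod n) = z (Suc k mod n)"
     "z' (n+l) = z (n + Suc l mod m)" "z' (n + Suc l mod m) = z (n+l)"
  proof -
    define ni where "ni = Suc i mod n"
    define nk where "nk = Suc k mod n"
    define nj where "nj = Suc j mod m"
    define nl where "nl = Suc l mod m"
    have "ni < n" "nk < n" "nj < m" "nl < m" "nj \<noteq> nl" using a b unfolding ni_def nk_def nj_def nl_def by auto
    then show "z' i = z i" "z' (Suc i mod n) = z (Suc i mod n)" "z' (n+j) = z (n+j)"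
     "z' (n + Suc j mod m) = z (n + Suc j mod m)" "z' k = z k" "z' (Suc k mod n) = z (Suc k mod n)"
     "z' (n+l) = z (n + Suc l mod m)" "z' (n + Suc l mod m) = z (n+l)"
      unfolding z'_def ni_def[symmetric] nk_def[symmetric] nj_def[symmetric] nl_def[symmetric]
      using assms unfolding ni_def[symmetric] nk_def[symmetric] nj_def[symmetric] nl_def[symmetric] by auto
  qed
  show "EE n m z' i j * EE n m z' k l = - (EE n m z i j * EE n m z k l)"
    unfolding EE_def e
    by (simp add: eps_anti2[of "z k" "z (Suc k mod n)" "z (n + Suc l mod m)" "z (n + l)"])
qed
lemma tri: fixes n i :: nat assumes "3 \<le> n" "i < n"
  shows "Suc i mod n < n" "Suc (Suc i mod n) mod n < n" "i \<noteq> Suc i mod n"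
    "Suc i mod n \<noteq> Suc (Suc i mod n) mod n" "i \<noteq> Suc (Suc i mod n) mod n"
  using assms by (auto simp: nx_eq)

lemma dist6: fixes a b c d e f n m :: nat assumes "a<n" "b<n" "c<n" "d<m" "e<m" "f<m" "a\<noteq>b" "b\<noteq>c" "a\<noteq>c" "d\<noteq>e" "e\<noteq>f" "d\<noteq>f"
  shows "distinct [a,b,c,n+d,n+e,n+f]" "distinct [n+d,n+e,n+f,a,b,c]" "distinct [c,b,a,n+d,n+e,n+f]"
    "a < n+m" "b < n+m" "c < n+m" "n+d < n+m" "n+e < n+m" "n+f < n+m"
  by (insert assms, simp_all)

lemma apply6:
  fixes H F :: "(nat \<Rightarrow> point3) \<Rightarrow> real"
  assumes "distinct [a0,a1,a2,a3,a4,a5]" "a0 < N" "a1 < N" "a2 < N" "a3 < N" "a4 < N" "a5 < N"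
    and H: "H \<in> borel_measurable six_space"
    and F: "\<And>z. F z = H (\<lambda>t\<in>{..<6}. z ([a0,a1,a2,a3,a4,a5] ! t))"
  shows "(\<integral>z. F z \<partial>ZZ N) = (\<integral>w. H w \<partial>six_space)"
  unfolding F by (rule six) fact+

lemma r6: "(\<lambda>t\<in>{..<6::nat}. z ([a0,a1,a2,a3,a4,a5] ! t)) 0 = z a0"
  "(\<lambda>t\<in>{..<6::nat}. z ([a0,a1,a2,a3,a4,a5] ! t)) 1 = z a1"
  "(\<lambda>t\<in>{..<6::nat}. z ([a0,a1,a2,a3,a4,a5] ! t)) 2 = z a2"
  "(\<lambda>t\<in>{..<6::nat}. z ([a0,a1,a2,a3,a4,a5] ! t)) 3 = z a3"
  "(\<lambda>t\<in>{..<6::nat}. z ([a0,a1,a2,a3,a4,a5] ! t)) 4 = z a4"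
  "(\<lambda>t\<in>{..<6::nat}. z ([a0,a1,a2,a3,a4,a5] ! t)) 5 = z a5"
  by (simp_all add: numeral_eq_Suc)

context
  fixes n m i j k l :: nat
  assumes n3: "3 \<le> n" and m3: "3 \<le> m" and ij: "i < n" "j < m" "k < n" "l < m"
begin

lemma trX: "Suc i mod n < n" "Suc (Suc i mod n) mod n < n" "i \<noteq> Suc i mod n"
    "Suc i mod n \<noteq> Suc (Suc i mod n) mod n" "i \<noteq> Suc (Suc i mod n) mod n"
  using tri[OF n3 ij(1)] .
lemma trK: "Suc k mod n < n" "Suc (Suc k mod n) mod n < n" "k \<noteq> Suc k mod n"
    "Suc k mod n \<noteq> Suc (Suc k mod n) mod n" "k \<noteq> Suc (Suc k mod n) mod n"
  using tri[OF n3 ij(3)] .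
lemma trY: "Suc j mod m < m" "Suc (Suc j mod m) mod m < m" "j \<noteq> Suc j mod m"
    "Suc j mod m \<noteq> Suc (Suc j mod m) mod m" "j \<noteq> Suc (Suc j mod m) mod m"
  using tri[OF m3 ij(2)] .
lemma trL: "Suc l mod m < m" "Suc (Suc l mod m) mod m < m" "l \<noteq> Suc l mod m"
    "Suc l mod m \<noteq> Suc (Suc l mod m) mod m" "l \<noteq> Suc (Suc l mod m) mod m"
  using tri[OF m3 ij(4)] .

lemmas dIJ = dist6[OF ij(1) trX(1,2) ij(2) trY(1,2) trX(3-5) trY(3-5)]
lemmas dKL = dist6[OF ij(3) trK(1,2) ij(4) trL(1,2) trK(3-5) trL(3-5)]
lemmas dIL = dist6[OF ij(1) trX(1,2) ij(4) trL(1,2) trX(3-5) trL(3-5)]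
lemmas dKJ = dist6[OF ij(3) trK(1,2) ij(2) trY(1,2) trK(3-5) trY(3-5)]

lemma c00: assumes "k = i" "l = j"
  shows "(\<integral>z. EE n m z i j * EE n m z k l \<partial>ZZ (n+m)) = 2 * const_s"
  unfolding Hs_int[symmetric] using assms
  by (intro apply6[OF dIJ(1,4-9) Hs_meas]) (simp add: r6 EE_def)

abbreviation "Hu \<equiv> (\<lambda>w. eps (w 0) (w 1) (w 3) (w 4) * eps (w 0) (w 1) (w 4) (w 5))"
abbreviation "Hv \<equiv> (\<lambda>w. eps (w 0) (w 1) (w 3) (w 4) * eps (w 1) (w 2) (w 4) (w 5))"

lemma c01: assumes "k = i" "l = Suc j mod m"
  shows "(\<integral>z. EE n m z i j * EE n m z k l \<partial>ZZ (n+m)) = const_u"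
  unfolding const_u_def six_space_def[symmetric] using assms
  by (intro apply6[OF dIJ(1,4-9) Hu_meas]) (simp add: r6 EE_def)

lemma c02: assumes "k = i" "j = Suc l mod m"
  shows "(\<integral>z. EE n m z i j * EE n m z k l \<partial>ZZ (n+m)) = const_u"
  unfolding const_u_def six_space_def[symmetric] using assms
  by (intro apply6[OF dIL(1,4-9) Hu_meas]) (simp add: r6 EE_def mult.commute)

lemma c10: assumes "k = Suc i mod n" "l = j"
  shows "(\<integral>z. EE n m z i j * EE n m z k l \<partial>ZZ (n+m)) = const_u"
  unfolding const_u_def six_space_def[symmetric] using assms
  by (intro apply6[OF dIJ(2,7,8,9,4,5,6) Hu_meas]) 
    (simp add: r6 EE_def eps_sym[of "z (n+j)" "z (n + Suc j mod m)" "z i" "z (Suc i mod n)" for z]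
       eps_sym[of "z (n+j)" "z (n + Suc j mod m)" "z (Suc i mod n)" "z (Suc (Suc i mod n) mod n)" for z])

lemma c20: assumes "i = Suc k mod n" "l = j"
  shows "(\<integral>z. EE n m z i j * EE n m z k l \<partial>ZZ (n+m)) = const_u"
  unfolding const_u_def six_space_def[symmetric] using assms
  by (intro apply6[OF dKJ(2,7,8,9,4,5,6) Hu_meas]) 
    (simp add: r6 EE_def mult.commute eps_sym[of "z (n+j)" "z (n + Suc j mod m)" "z k" "z (Suc k mod n)" for z]
       eps_sym[of "z (n+j)" "z (n + Suc j mod m)" "z (Suc k mod n)" "z (Suc (Suc k mod n) mod n)" for z])

lemma c11: assumes "k = Suc i mod n" "l = Suc j mod m"
  shows "(\<integral>z. EE n m z i j * EE n m z k l \<partial>ZZ (n+m)) = const_v"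
  unfolding const_v_def six_space_def[symmetric] using assms
  by (intro apply6[OF dIJ(1,4-9) Hv_meas]) (simp add: r6 EE_def)

lemma c22: assumes "i = Suc k mod n" "j = Suc l mod m"
  shows "(\<integral>z. EE n m z i j * EE n m z k l \<partial>ZZ (n+m)) = const_v"
  unfolding const_v_def six_space_def[symmetric] using assms
  by (intro apply6[OF dKL(1,4-9) Hv_meas]) (simp add: r6 EE_def mult.commute)

lemma c12: assumes "k = Suc i mod n" "j = Suc l mod m"
  shows "(\<integral>z. EE n m z i j * EE n m z k l \<partial>ZZ (n+m)) = const_v"
  unfolding const_v_def six_space_def[symmetric] using assms
  by (intro apply6[OF dIL(3,6,5,4,7,8,9) Hv_meas])
    (simp add: r6 EE_def mult.commute
      eps_anti[of "z (Suc (Suc i mod n) mod n)" "z (Suc i mod n)" "z (n + l)" "z (n + Suc l mod m)" for z]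
      eps_anti[of "z (Suc i mod n)" "z i" "z (n + Suc l mod m)" "z (n + Suc (Suc l mod m) mod m)" for z])

lemma c21: assumes "i = Suc k mod n" "l = Suc j mod m"
  shows "(\<integral>z. EE n m z i j * EE n m z k l \<partial>ZZ (n+m)) = const_v"
  unfolding const_v_def six_space_def[symmetric] using assms
  by (intro apply6[OF dKJ(3,6,5,4,7,8,9) Hv_meas])
    (simp add: r6 EE_def mult.commute
      eps_anti[of "z (Suc (Suc k mod n) mod n)" "z (Suc k mod n)" "z (n + j)" "z (n + Suc j mod m)" for z]
      eps_anti[of "z (Suc k mod n)" "z k" "z (n + Suc j mod m)" "z (n + Suc (Suc j mod m) mod m)" for z])

end

definition clsf :: "nat \<Rightarrow> nat \<Rightarrow> nat \<Rightarrow> nat" where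
  "clsf n i k = (if k = i then 0 else if k = Suc i mod n then 1 else if i = Suc k mod n then 2 else 3)"

definition wt :: "nat \<Rightarrow> nat \<Rightarrow> real" where
  "wt a b = (if a = 0 \<and> b = 0 then 2 * const_s else if a = 0 \<and> (b = 1 \<or> b = 2) then const_u
     else if (a = 1 \<or> a = 2) \<and> b = 0 then const_u else if (a = 1 \<or> a = 2) \<and> (b = 1 \<or> b = 2) then const_v else 0)"

lemma term_val:
  assumes A: "3 \<le> n" "3 \<le> m" "i < n" "j < m" "k < n" "l < m"
  shows "(\<integral>z. EE n m z i j * EE n m z k l \<partial>ZZ (n+m)) = wt (clsf n i k) (clsf m j l)"
proof -
  consider (x0) "k = i" | (x1) "k \<noteq> i" "k = Suc i mod n" | (x2) "k \<noteq> i" "k \<noteq> Suc i mod n" "i = Suc k mod n"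
    | (x3) "k \<noteq> i" "k \<noteq> Suc i mod n" "i \<noteq> Suc k mod n" by blast
  then show ?thesis
  proof cases
    case x0
    then have hx: "clsf n i k = 0" by (simp add: clsf_def)
    consider (y0) "l = j" | (y1) "l \<noteq> j" "l = Suc j mod m" | (y2) "l \<noteq> j" "l \<noteq> Suc j mod m" "j = Suc l mod m"
      | (y3) "l \<noteq> j" "l \<noteq> Suc j mod m" "j \<noteq> Suc l mod m" by blast
    then show ?thesis
    proof cases
      case y0
      then have hy: "clsf m j l = 0" by (simp add: clsf_def)
      show ?thesis by (simp only: c00[OF A x0 y0] hx hy) (simp add: wt_def)
    next
      case y1
      then have hy: "clsf m j l = 1" by (simp add: clsf_def)
      show ?thesis by (simp only: c01[OF A x0 y1(2)] hx hy) (simp add: wt_def)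
    next
      case y2
      then have hy: "clsf m j l = 2" by (simp add: clsf_def)
      show ?thesis by (simp only: c02[OF A x0 y2(3)] hx hy) (simp add: wt_def)
    next
      case y3
      then have hy: "clsf m j l = 3" by (simp add: clsf_def)
      show ?thesis by (simp only: zeroY[OF A(3-6) y3] hx hy) (simp add: wt_def)
    qed
  next
    case x1
    then have hx: "clsf n i k = 1" by (simp add: clsf_def)
    consider (y0) "l = j" | (y1) "l \<noteq> j" "l = Suc j mod m" | (y2) "l \<noteq> j" "l \<noteq> Suc j mod m" "j = Suc l mod m"
      | (y3) "l \<noteq> j" "l \<noteq> Suc j mod m" "j \<noteq> Suc l mod m" by blast
    then show ?thesis
    proof cases
      case y0
      then have hy: "clsf m j l = 0" by (simp add: clsf_def)
      show ?thesis by (simp only: c10[OF A x1(2) y0] hx hy) (simp add: wt_def)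
    next
      case y1
      then have hy: "clsf m j l = 1" by (simp add: clsf_def)
      show ?thesis by (simp only: c11[OF A x1(2) y1(2)] hx hy) (simp add: wt_def)
    next
      case y2
      then have hy: "clsf m j l = 2" by (simp add: clsf_def)
      show ?thesis by (simp only: c12[OF A x1(2) y2(3)] hx hy) (simp add: wt_def)
    next
      case y3
      then have hy: "clsf m j l = 3" by (simp add: clsf_def)
      show ?thesis by (simp only: zeroY[OF A(3-6) y3] hx hy) (simp add: wt_def)
    qed
  next
    case x2
    then have hx: "clsf n i k = 2" by (simp add: clsf_def)
    consider (y0) "l = j" | (y1) "l \<noteq> j" "l = Suc j mod m" | (y2) "l \<noteq> j" "l \<noteq> Suc j mod m" "j = Suc l mod m"
      | (y3) "l \<noteq> j" "l \<noteq> Suc j mod m" "j \<noteq> Suc l mod m" by blast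
    then show ?thesis
    proof cases
      case y0
      then have hy: "clsf m j l = 0" by (simp add: clsf_def)
      show ?thesis by (simp only: c20[OF A x2(3) y0] hx hy) (simp add: wt_def)
    next
      case y1
      then have hy: "clsf m j l = 1" by (simp add: clsf_def)
      show ?thesis by (simp only: c21[OF A x2(3) y1(2)] hx hy) (simp add: wt_def)
    next
      case y2
      then have hy: "clsf m j l = 2" by (simp add: clsf_def)
      show ?thesis by (simp only: c22[OF A x2(3) y2(3)] hx hy) (simp add: wt_def)
    next
      case y3
      then have hy: "clsf m j l = 3" by (simp add: clsf_def)
      show ?thesis by (simp only: zeroY[OF A(3-6) y3] hx hy) (simp add: wt_def)
    qed
  next
    case x3
    then have hx: "clsf n i k = 3" by (simp add: clsf_def)
    consider (y0) "l = j" | (y1) "l \<noteq> j" "l = Suc j mod m" | (y2) "l \<noteq> j" "l \<noteq> Suc j mod m" "j = Suc l mod m"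
      | (y3) "l \<noteq> j" "l \<noteq> Suc j mod m" "j \<noteq> Suc l mod m" by blast
    then show ?thesis
    proof cases
      case y0
      then have hy: "clsf m j l = 0" by (simp add: clsf_def)
      show ?thesis by (simp only: zeroX[OF A(3-6) x3] hx hy) (simp add: wt_def)
    next
      case y1
      then have hy: "clsf m j l = 1" by (simp add: clsf_def)
      show ?thesis by (simp only: zeroX[OF A(3-6) x3] hx hy) (simp add: wt_def)
    next
      case y2
      then have hy: "clsf m j l = 2" by (simp add: clsf_def)
      show ?thesis by (simp only: zeroX[OF A(3-6) x3] hx hy) (simp add: wt_def)
    next
      case y3
      then have hy: "clsf m j l = 3" by (simp add: clsf_def)
      show ?thesis by (simp only: zeroX[OF A(3-6) x3] hx hy) (simp add: wt_def)
    qed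
  qed
qed

lemma int_EE:
  assumes "i < n" "j < m" "k < n" "l < m"
  shows "integrable (ZZ (n+m)) (\<lambda>z. EE n m z i j * EE n m z k l)"
proof -
  interpret prob_space "ZZ (n+m)" by (rule prob_space_PiM) (rule prob_unif)
  show ?thesis
  proof (rule integrable_const_bound[where B=1])
    show "AE x in ZZ (n+m). norm (EE n m x i j * EE n m x k l) \<le> 1"
    proof (intro AE_I2)
      fix x
      show "norm (EE n m x i j * EE n m x k l) \<le> 1"
        using eps_bound[of "x i" "x (Suc i mod n)" "x (n + j)" "x (n + Suc j mod m)"]
          eps_bound[of "x k" "x (Suc k mod n)" "x (n + l)" "x (n + Suc l mod m)"]
        unfolding EE_def by auto
    qed
    show "(\<lambda>z. EE n m z i j * EE n m z k l) \<in> borel_measurable (ZZ (n+m))"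
      by (rule G_meas) fact+
  qed
qed

lemma nx_pv: "k < n \<Longrightarrow> i < n \<Longrightarrow> (i = Suc k mod n) \<longleftrightarrow> (k = (if i = 0 then n - 1 else i - 1))"
  by (auto simp: nx_eq)

lemma cnt_row0: assumes "i < n" shows "(\<Sum>k<n. (if clsf n i k = 0 then 1 else 0 :: real)) = 1"
proof -
  have "{..<n} \<inter> {k. clsf n i k = 0} = {i}" using assms by (auto simp: clsf_def)
  then show ?thesis by (simp add: sum.If_cases)
qed

lemma cnt_row12: assumes "3 \<le> n" "i < n"
  shows "(\<Sum>k<n. (if clsf n i k = 1 \<or> clsf n i k = 2 then 1 else 0 :: real)) = 2"
proof -
  define a where "a = (if Suc i = n then 0 else Suc i)"
  define b where "b = (if i = 0 then n - 1 else i - 1)"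
  have "{..<n} \<inter> {k. (clsf n i k = 1 \<or> clsf n i k = 2)} = {a, b}"
  proof (intro set_eqI iffI)
    fix k assume "k \<in> {..<n} \<inter> {k. (clsf n i k = 1 \<or> clsf n i k = 2)}"
    then show "k \<in> {a, b}" using assms nx_pv[of k n i]
      unfolding a_def b_def clsf_def by (auto simp: nx_eq split: if_splits)
  next
    fix k assume "k \<in> {a, b}"
    then show "k \<in> {..<n} \<inter> {k. (clsf n i k = 1 \<or> clsf n i k = 2)}" using assms
      unfolding a_def b_def clsf_def by (auto simp: nx_eq split: if_splits)
  qed
  moreover have "a \<noteq> b" using assms unfolding a_def b_def by auto
  ultimately show ?thesis by (simp add: sum.If_cases)
qed

definition ind :: "bool \<Rightarrow> real" where "ind b = (if b then 1 else 0)"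

lemma wt_split: "wt a b = 2 * const_s * (ind (a = 0) * ind (b = 0)) + const_u * (ind (a = 0) * ind (b = 1 \<or> b = 2))
   + const_u * (ind (a = 1 \<or> a = 2) * ind (b = 0)) + const_v * (ind (a = 1 \<or> a = 2) * ind (b = 1 \<or> b = 2))"
  unfolding wt_def ind_def by auto

lemma sep: "(\<Sum>i<n. \<Sum>k<n. \<Sum>j<m. \<Sum>l<m. (f i k :: real) * g j l) = (\<Sum>i<n. \<Sum>k<n. f i k) * (\<Sum>j<m. \<Sum>l<m. g j l)"
  by (simp only: sum_distrib_right) (simp only: sum_distrib_left)

lemma sep': "(\<Sum>i<n. \<Sum>k<n. \<Sum>j<m. \<Sum>l<m. c * ((f i k :: real) * g j l)) = c * ((\<Sum>i<n. \<Sum>k<n. f i k) * (\<Sum>j<m. \<Sum>l<m. g j l))"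
  by (subst sep[symmetric]) (simp add: sum_distrib_left)

lemma total:
  assumes "3 \<le> n" "3 \<le> m"
  shows "(\<Sum>i<n. \<Sum>k<n. \<Sum>j<m. \<Sum>l<m. wt (clsf n i k) (clsf m j l)) = real n * real m * (2 * const_s + 4 * const_u + 4 * const_v)"
proof -
  have X0: "(\<Sum>i<n. \<Sum>k<n. ind (clsf n i k = 0)) = real n" using cnt_row0 by (simp add: ind_def)
  have X1: "(\<Sum>i<n. \<Sum>k<n. ind (clsf n i k = 1 \<or> clsf n i k = 2)) = 2 * real n"
    using cnt_row12[OF assms(1)] by (simp add: ind_def)
  have Y0: "(\<Sum>i<m. \<Sum>k<m. ind (clsf m i k = 0)) = real m" using cnt_row0 by (simp add: ind_def)
  have Y1: "(\<Sum>i<m. \<Sum>k<m. ind (clsf m i k = 1 \<or> clsf m i k = 2)) = 2 * real m"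
    using cnt_row12[OF assms(2)] by (simp add: ind_def)
  show ?thesis
    unfolding wt_split
    by (simp only: sum.distrib sep' X0 X1 Y0 Y1) (simp add: algebra_simps)
qed

theorem mainTheorem1:
  fixes n m :: nat
  assumes "n \<ge> 3" and "m \<ge> 3"
  shows "(\<integral>\<omega>. (linking_number n (fst \<omega>) m (snd \<omega>))\<^sup>2 \<partial>(embed_space n m))
         = (1/2) * real n * real m * const_q"
proof -
  define G where "G = (\<lambda>z. (1/4::real) * (\<Sum>i<n. \<Sum>k<n. \<Sum>j<m. \<Sum>l<m. EE n m z i j * EE n m z k l))"
  have Gm: "G \<in> borel_measurable (ZZ (n+m))"
    unfolding G_def
    by (intro borel_measurable_times borel_measurable_const borel_measurable_sum G_meas) auto
  have pw: "(linking_number n (fst p) m (snd p))\<^sup>2 = G (Psi n m p)" for p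
  proof -
    have n0: "0 < n" using assms by auto
    have lk: "linking_number n (fst p) m (snd p) = 1/2 * (\<Sum>i<n. \<Sum>j<m. EE n m (Psi n m p) i j)"
      unfolding linking_number_def
    proof (intro arg_cong[where f="\<lambda>x. 1/2 * x"] sum.cong refl)
      fix i j assume "i \<in> {..<n}" "j \<in> {..<m}"
      moreover have "Suc i mod n < n" "Suc j mod m < m" using calculation by auto
      ultimately show "eps (fst p i) (fst p (Suc i mod n)) (snd p j) (snd p (Suc j mod m)) = EE n m (Psi n m p) i j"
        unfolding EE_def Psi_def by (simp add: merge_def)
    qed
    show ?thesis unfolding lk G_def
      by (simp add: power2_eq_square sum_product)
  qed
  have "(\<integral>\<omega>. (linking_number n (fst \<omega>) m (snd \<omega>))\<^sup>2 \<partial>(embed_space n m))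
      = (\<integral>p. G (Psi n m p) \<partial>embed_space n m)" by (simp add: pw)
  also have "\<dots> = (\<integral>z. G z \<partial>ZZ (n+m))" by (rule embed_to_Z[OF Gm])
  also have "\<dots> = 1/4 * (\<Sum>i<n. \<Sum>k<n. \<Sum>j<m. \<Sum>l<m. (\<integral>z. EE n m z i j * EE n m z k l \<partial>ZZ (n+m)))"
  proof -
    let ?F = "\<lambda>i k j l z. EE n m z i j * EE n m z k l"
    have I4: "(\<integral>z. (\<Sum>l<m. ?F i k j l z) \<partial>ZZ (n+m)) = (\<Sum>l<m. \<integral>z. ?F i k j l z \<partial>ZZ (n+m))"
      if "i < n" "k < n" "j < m" for i k j
      using that by (intro Bochner_Integration.integral_sum) (auto intro: int_EE)
    have I3: "(\<integral>z. (\<Sum>j<m. \<Sum>l<m. ?F i k j l z) \<partial>ZZ (n+m)) = (\<Sum>j<m. \<Sum>l<m. \<integral>z. ?F i k j l z \<partial>ZZ (n+m))"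
      if "i < n" "k < n" for i k
      using that by (subst Bochner_Integration.integral_sum) (auto intro!: int_EE integrable_sum simp: I4)
    have I2: "(\<integral>z. (\<Sum>k<n. \<Sum>j<m. \<Sum>l<m. ?F i k j l z) \<partial>ZZ (n+m)) = (\<Sum>k<n. \<Sum>j<m. \<Sum>l<m. \<integral>z. ?F i k j l z \<partial>ZZ (n+m))"
      if "i < n" for i
      using that by (subst Bochner_Integration.integral_sum) (auto intro!: int_EE integrable_sum simp: I3)
    have I1: "(\<integral>z. (\<Sum>i<n. \<Sum>k<n. \<Sum>j<m. \<Sum>l<m. ?F i k j l z) \<partial>ZZ (n+m)) = (\<Sum>i<n. \<Sum>k<n. \<Sum>j<m. \<Sum>l<m. \<integral>z. ?F i k j l z \<partial>ZZ (n+m))"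
    proof (subst Bochner_Integration.integral_sum)
      show "integrable (ZZ (n + m)) (\<lambda>z. \<Sum>k<n. \<Sum>j<m. \<Sum>l<m. ?F i k j l z)" if "i \<in> {..<n}" for i
        using that by (intro Bochner_Integration.integrable_sum int_EE) auto
    qed (simp add: I2)
    show ?thesis unfolding G_def by (simp add: I1)
  qed
  also have "\<dots> = 1/4 * (\<Sum>i<n. \<Sum>k<n. \<Sum>j<m. \<Sum>l<m. wt (clsf n i k) (clsf m j l))"
    using assms by (simp add: term_val)
  also have "\<dots> = 1/4 * (real n * real m * (2 * const_s + 4 * const_u + 4 * const_v))"
    by (simp only: total[OF assms])
  also have "\<dots> = (1/2) * real n * real m * const_q"
    unfolding const_q_def by (simp add: algebra_simps)
  finally show ?thesis .
qed
end
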